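(* For every $f:\{0,1\}^d\to\{0,1\}$, with $x,y,z$ sampled uniformly and independently from $\{0,1\}^d$, $$\Pr[(x,y)\text{ violates linearity}]\le 3\varepsilon_f,\qquad \Pr[(x,y)\text{ and }(x,z)\text{ both violate linearity}]\le\varepsilon_f+4\varepsilon_f^2.$$
   Context: A pair $(x,y)\in(\{0,1\}^d)^2$ violates linearity (for $f$) if $f(x)+f(y)\neq f(x\oplus y)$ (mod 2), where $\oplus$ is bitwise XOR. $\varepsilon_f$ (distance of $f$ to linearity) is the minimum over linear $g$ of $\Pr_{x\sim\{0,1\}^d}[f(x)\neq g(x)]$, where $g:\{0,1\}^d\to\{0,1\}$ is linear if $g(x)=\sum_{i\in S}x[i]\bmod2$ for some $S\subseteq[d]$. *)

theory Defs
  imports "HOL-Analysis.Analysis"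
begin

text \<open>Boolean functions take values in bool (True = 1, False = 0); addition mod 2 is
  inequality of booleans (exclusive or).\<close>

definition cube :: "nat \<Rightarrow> (nat \<Rightarrow> bool) set" where
  "cube d = {x. \<forall>i. d \<le> i \<longrightarrow> \<not> x i}"

definition bxor :: "(nat \<Rightarrow> bool) \<Rightarrow> (nat \<Rightarrow> bool) \<Rightarrow> (nat \<Rightarrow> bool)" where
  "bxor x y = (\<lambda>i. x i \<noteq> y i)"

definition violates :: "((nat \<Rightarrow> bool) \<Rightarrow> bool) \<Rightarrow> (nat \<Rightarrow> bool) \<Rightarrow> (nat \<Rightarrow> bool) \<Rightarrow> bool" where
  "violates f x y \<longleftrightarrow> (f x \<noteq> f y) \<noteq> f (bxor x y)"

definition lin_fun :: "nat set \<Rightarrow> (nat \<Rightarrow> bool) \<Rightarrow> bool" where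
  "lin_fun S x = odd (card {i\<in>S. x i})"

definition dist_fun :: "nat \<Rightarrow> ((nat \<Rightarrow> bool) \<Rightarrow> bool) \<Rightarrow> ((nat \<Rightarrow> bool) \<Rightarrow> bool) \<Rightarrow> real" where
  "dist_fun d f g = real (card {x\<in>cube d. f x \<noteq> g x}) / real (card (cube d))"

definition eps_lin :: "nat \<Rightarrow> ((nat \<Rightarrow> bool) \<Rightarrow> bool) \<Rightarrow> real" where
  "eps_lin d f = Min ((\<lambda>S. dist_fun d f (lin_fun S)) ` Pow {0..<d})"

end

theory Submission
  imports Defs
begin

lemma cube_eq: "cube d = (\<lambda>S i. i \<in> S) ` Pow {0..<d}"
proof
  show "cube d \<subseteq> (\<lambda>S i. i \<in> S) ` Pow {0..<d}"
  proof
    fix x assume x: "x \<in> cube d"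
    have "x = (\<lambda>i. i \<in> {i. x i})" by auto
    moreover have "{i. x i} \<in> Pow {0..<d}" using x by (auto simp: cube_def not_le[symmetric])
    ultimately show "x \<in> (\<lambda>S i. i \<in> S) ` Pow {0..<d}" by blast
  qed
  show "(\<lambda>S i. i \<in> S) ` Pow {0..<d} \<subseteq> cube d" by (auto simp: cube_def)
qed

lemma finite_cube: "finite (cube d)"
  by (simp add: cube_eq)

lemma cube_pos: "card (cube d) > 0"
proof -
  have "(\<lambda>_. False) \<in> cube d" by (simp add: cube_def)
  thus ?thesis using finite_cube card_gt_0_iff by blast
qed

lemma bxor_cube: "x \<in> cube d \<Longrightarrow> y \<in> cube d \<Longrightarrow> bxor x y \<in> cube d"
  by (auto simp: cube_def bxor_def)

lemma bxor_inv: "bxor x (bxor x y) = y"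
  by (auto simp: bxor_def)

lemma lin_fun_xor:
  assumes "finite S"
  shows "lin_fun S (bxor x y) = (lin_fun S x \<noteq> lin_fun S y)"
proof -
  define A where "A = {i\<in>S. x i}"
  define B where "B = {i\<in>S. y i}"
  have fA: "finite A" "finite B" using assms by (auto simp: A_def B_def)
  have eq: "{i\<in>S. bxor x y i} = (A - B) \<union> (B - A)" by (auto simp: A_def B_def bxor_def)
  have c: "card {i\<in>S. bxor x y i} = card (A - B) + card (B - A)"
    unfolding eq by (rule card_Un_disjoint) (use fA in auto)
  have c1: "card (A - B) = card A - card (A \<inter> B)" using fA card_Diff_subset_Int by (metis Int_lower2 finite_Int)
  have c2: "card (B - A) = card B - card (A \<inter> B)" using fA card_Diff_subset_Int by (metis Int_commute Int_lower2 finite_Int)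
  have l1: "card (A \<inter> B) \<le> card A" "card (A \<inter> B) \<le> card B" using fA by (auto intro: card_mono)
  show ?thesis unfolding lin_fun_def A_def[symmetric] B_def[symmetric] c c1 c2
    using l1 by (auto simp: even_diff_nat)
qed

lemma card_Sigma_le:
  assumes "finite A" "\<And>a. a \<in> A \<Longrightarrow> finite (F a)" "\<And>a. a \<in> A \<Longrightarrow> card (F a) \<le> K"
  shows "card (Sigma A F) \<le> card A * K"
proof -
  have "card (Sigma A F) = (\<Sum>a\<in>A. card (F a))" using assms card_SigmaI by blast
  also have "\<dots> \<le> card A * K" using sum_bounded_above[of A "\<lambda>a. card (F a)" K] assms by simp
  finally show ?thesis .
qed

lemma aux_alg: "(n::real) \<noteq> 0 \<Longrightarrow> (b*n*n + n*(2*b)^2)/(n*(n*n)) = b/n + 4*(b/n)^2"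
  by (simp add: field_simps power2_eq_square)

theorem claimB3:
  fixes d :: nat and f :: "(nat \<Rightarrow> bool) \<Rightarrow> bool"
  shows "real (card {(x, y). x \<in> cube d \<and> y \<in> cube d \<and> violates f x y})
           / real (card (cube d)) ^ 2 \<le> 3 * eps_lin d f
    \<and> real (card {(x, y, z). x \<in> cube d \<and> y \<in> cube d \<and> z \<in> cube d
                        \<and> violates f x y \<and> violates f x z})
           / real (card (cube d)) ^ 3 \<le> eps_lin d f + 4 * (eps_lin d f)^2"
proof -
  define C where "C = cube d"
  have fC: "finite C" and Cpos: "card C > 0" using finite_cube cube_pos by (auto simp: C_def)
  have "eps_lin d f \<in> (\<lambda>S. dist_fun d f (lin_fun S)) ` Pow {0..<d}"
    unfolding eps_lin_def by (rule Min_in) auto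
  then obtain S where S: "S \<subseteq> {0..<d}" and eS: "eps_lin d f = dist_fun d f (lin_fun S)" by auto
  have fS: "finite S" using S finite_subset by blast
  define g where "g = lin_fun S"
  define B where "B = {x\<in>C. f x \<noteq> g x}"
  have BC: "B \<subseteq> C" by (auto simp: B_def)
  have fB: "finite B" using fC BC finite_subset by blast
  define N where "N = card C"
  define b where "b = card B"
  have eps: "eps_lin d f = real b / real N" by (simp add: eS dist_fun_def b_def B_def N_def C_def g_def)
  have Npos: "real N > 0" using Cpos by (simp add: N_def)
  have gl: "\<And>x y. g (bxor x y) = (g x \<noteq> g y)" using lin_fun_xor[OF fS] by (simp add: g_def)
  have key: "\<And>x y. x \<in> C \<Longrightarrow> y \<in> C \<Longrightarrow> violates f x y \<Longrightarrow> x \<in> B \<or> y \<in> B \<or> bxor x y \<in> B"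
  proof -
    fix x y assume xy: "x \<in> C" "y \<in> C" "violates f x y"
    have xyC: "bxor x y \<in> C" using xy bxor_cube by (simp add: C_def)
    show "x \<in> B \<or> y \<in> B \<or> bxor x y \<in> B"
    proof (rule ccontr)
      assume "\<not> ?thesis"
      hence "f x = g x" "f y = g y" "f (bxor x y) = g (bxor x y)" using xy xyC by (auto simp: B_def)
      thus False using xy(3) gl by (auto simp: violates_def)
    qed
  qed
  define T where "T x = {y\<in>C. bxor x y \<in> B}" for x
  have Tb: "card (T x) \<le> b" for x
  proof -
    have "T x \<subseteq> bxor x ` B" unfolding T_def using bxor_inv
      by (metis (no_types, lifting) image_eqI mem_Collect_eq subsetI)
    hence "card (T x) \<le> card (bxor x ` B)" using fB by (intro card_mono) auto
    also have "\<dots> \<le> b" unfolding b_def by (rule card_image_le[OF fB])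
    finally show ?thesis .
  qed
  have fT: "finite (T x)" for x using fC by (simp add: T_def)
  define U where "U x = B \<union> T x" for x
  have fU: "finite (U x)" for x using fB fT by (simp add: U_def)
  have Ub: "card (U x) \<le> 2 * b" for x
    using card_Un_le[of B "T x"] Tb[of x] by (simp add: U_def b_def)
  have UU: "card (U x \<times> U x) \<le> (2*b)^2" for x
    using Ub[of x] mult_le_mono[of "card (U x)" "2*b" "card (U x)" "2*b"] by (simp add: card_cartesian_product power2_eq_square)
  have V_sub: "{(x, y). x \<in> cube d \<and> y \<in> cube d \<and> violates f x y} \<subseteq> (B \<times> C) \<union> (C \<times> B) \<union> Sigma C T"
  proof
    fix p assume "p \<in> {(x, y). x \<in> cube d \<and> y \<in> cube d \<and> violates f x y}"
    then obtain x y where p: "p = (x,y)" "x \<in> C" "y \<in> C" "violates f x y" by (auto simp: C_def)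
    from key[OF p(2-4)] p show "p \<in> (B \<times> C) \<union> (C \<times> B) \<union> Sigma C T" by (auto simp: T_def)
  qed
  have cV: "card {(x, y). x \<in> cube d \<and> y \<in> cube d \<and> violates f x y} \<le> 3 * N * b"
  proof -
    have "card {(x, y). x \<in> cube d \<and> y \<in> cube d \<and> violates f x y} \<le> card ((B \<times> C) \<union> (C \<times> B) \<union> Sigma C T)"
      using V_sub fC fB fT by (intro card_mono) auto
    also have "\<dots> \<le> card (B \<times> C) + card (C \<times> B) + card (Sigma C T)"
      by (meson add_le_mono card_Un_le le_refl order_trans)
    also have "\<dots> \<le> b * N + N * b + N * b"
      using card_Sigma_le[of C T b] fC fT Tb by (simp add: card_cartesian_product b_def N_def)
    also have "b * N + N * b + N * b = 3 * N * b" by (simp only: mult.commute[of b N])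
    finally show ?thesis .
  qed
  have W_sub: "{(x, y, z). x \<in> cube d \<and> y \<in> cube d \<and> z \<in> cube d \<and> violates f x y \<and> violates f x z}
      \<subseteq> (B \<times> C \<times> C) \<union> Sigma C (\<lambda>x. U x \<times> U x)"
  proof
    fix p assume "p \<in> {(x, y, z). x \<in> cube d \<and> y \<in> cube d \<and> z \<in> cube d \<and> violates f x y \<and> violates f x z}"
    then obtain x y z where p: "p = (x,y,z)" "x \<in> C" "y \<in> C" "z \<in> C" "violates f x y" "violates f x z" by (auto simp: C_def)
    from key[OF p(2,3,5)] key[OF p(2,4,6)] p show "p \<in> (B \<times> C \<times> C) \<union> Sigma C (\<lambda>x. U x \<times> U x)"
      by (auto simp: T_def U_def)
  qed
  have cW: "card {(x, y, z). x \<in> cube d \<and> y \<in> cube d \<and> z \<in> cube d \<and> violates f x y \<and> violates f x z}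
      \<le> b * N * N + N * (2*b)^2"
  proof -
    have "card {(x, y, z). x \<in> cube d \<and> y \<in> cube d \<and> z \<in> cube d \<and> violates f x y \<and> violates f x z}
       \<le> card ((B \<times> C \<times> C) \<union> Sigma C (\<lambda>x. U x \<times> U x))"
      using W_sub fC fB fU by (intro card_mono) auto
    also have "\<dots> \<le> card (B \<times> C \<times> C) + card (Sigma C (\<lambda>x. U x \<times> U x))"
      by (rule card_Un_le)
    also have "\<dots> \<le> b * N * N + N * (2*b)^2"
      using card_Sigma_le[of C "\<lambda>x. U x \<times> U x" "(2*b)^2"] fC fU UU
      by (simp add: card_cartesian_product b_def N_def)
    finally show ?thesis .
  qed
  have r1: "real (card {(x, y). x \<in> cube d \<and> y \<in> cube d \<and> violates f x y}) \<le> 3 * real N * real b"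
  proof -
    have "real (card {(x, y). x \<in> cube d \<and> y \<in> cube d \<and> violates f x y}) \<le> real (3 * N * b)"
      using cV by (simp only: of_nat_le_iff)
    thus ?thesis by simp
  qed
  have r2: "real (card {(x, y, z). x \<in> cube d \<and> y \<in> cube d \<and> z \<in> cube d \<and> violates f x y \<and> violates f x z})
      \<le> real b * real N * real N + real N * (2 * real b)^2"
  proof -
    have "real (card {(x, y, z). x \<in> cube d \<and> y \<in> cube d \<and> z \<in> cube d \<and> violates f x y \<and> violates f x z}) \<le> real (b * N * N + N * (2*b)^2)"
      using cW by (simp only: of_nat_le_iff)
    thus ?thesis by simp
  qed
  have NC: "card (cube d) = N" by (simp add: N_def C_def)
  have N2: "real N ^ 2 = real N * real N" by (simp add: power2_eq_square)
  have N3: "real N ^ 3 = real N * (real N * real N)" by (simp add: power3_eq_cube)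
  have p1: "real (card {(x, y). x \<in> cube d \<and> y \<in> cube d \<and> violates f x y}) / real N ^ 2 \<le> 3 * (real b / real N)"
  proof -
    have "real (card {(x, y). x \<in> cube d \<and> y \<in> cube d \<and> violates f x y}) / real N ^ 2
       \<le> (3 * real N * real b) / (real N * real N)"
      unfolding N2 using r1 Npos by (intro divide_right_mono) auto
    also have "\<dots> = 3 * (real b / real N)" using Npos by simp
    finally show ?thesis .
  qed
  have p2: "real (card {(x, y, z). x \<in> cube d \<and> y \<in> cube d \<and> z \<in> cube d \<and> violates f x y \<and> violates f x z}) / real N ^ 3
        \<le> real b / real N + 4 * (real b / real N)^2"
  proof -
    have "real (card {(x, y, z). x \<in> cube d \<and> y \<in> cube d \<and> z \<in> cube d \<and> violates f x y \<and> violates f x z}) / real N ^ 3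
       \<le> (real b * real N * real N + real N * (2 * real b)^2) / (real N * (real N * real N))"
      unfolding N3 using r2 Npos by (intro divide_right_mono) auto
    also have "\<dots> = real b / real N + 4 * (real b / real N)^2" using Npos
      by (intro aux_alg) simp
    finally show ?thesis .
  qed
  show ?thesis unfolding eps NC using p1 p2 by blast
qed

end
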